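(* Let $\kappa=\kappa(|x|^2)$ and $\rho=\rho(|x|^2)$ be arbitrary smooth functions on a domain in $\mathbb{R}^n$ with $1-\kappa|x|^2>0$, and let $C$ be a non-zero constant. Then the Riemannian metric $$\bar\alpha=e^\rho\sqrt{|y|^2-\kappa\langle x,y\rangle^2}$$ has the closed and conformal $1$-form $$\bar\beta=C\sqrt{1-\kappa|x|^2}\,e^{2\rho}\langle x,y\rangle,$$ and $\bar b^2:=\|\bar\beta\|_{\bar\alpha}^2=C^2e^{2\rho}|x|^2$.
   Context: $|\cdot|$ and $\langle\cdot,\cdot\rangle$ denote the Euclidean norm and inner product on $\mathbb{R}^n$, and $(x,y)$ are standard coordinates on $T\mathbb{R}^n$. A $1$-form $\bar\beta=\bar b_iy^i$ is closed and conformal with respect to $\bar\alpha=\sqrt{\bar a_{ij}y^iy^j}$ if $\bar b_{i|j}=c(x)\bar a_{ij}$ for some function $c$, covariant derivative taken with respect to the Levi-Civita connection of $\bar\alpha$. *)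

theory Defs
  imports "HOL-Analysis.Analysis"
begin

definition smooth_on :: "real set \<Rightarrow> (real \<Rightarrow> real) \<Rightarrow> bool" where
  "smooth_on T f \<longleftrightarrow> (\<forall>k. \<forall>t\<in>T. ((deriv ^^ k) f) field_differentiable (at t))"

definition partial :: "(real^'n \<Rightarrow> real) \<Rightarrow> 'n \<Rightarrow> real^'n \<Rightarrow> real" where
  "partial f j x = deriv (\<lambda>t. f (x + t *\<^sub>R axis j 1)) 0"

definition metric_matrix :: "(real^'n \<Rightarrow> 'n \<Rightarrow> 'n \<Rightarrow> real) \<Rightarrow> real^'n \<Rightarrow> real^'n^'n" where
  "metric_matrix a x = (\<chi> i j. a x i j)"

definition inv_metric :: "(real^'n \<Rightarrow> 'n \<Rightarrow> 'n \<Rightarrow> real) \<Rightarrow> real^'n \<Rightarrow> 'n \<Rightarrow> 'n \<Rightarrow> real" where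
  "inv_metric a x i j = matrix_inv (metric_matrix a x) $ i $ j"

definition christoffel :: "(real^'n \<Rightarrow> 'n \<Rightarrow> 'n \<Rightarrow> real) \<Rightarrow> 'n \<Rightarrow> 'n \<Rightarrow> 'n \<Rightarrow> real^'n \<Rightarrow> real" where
  "christoffel a k i j x = (1/2) * (\<Sum>l\<in>UNIV. inv_metric a x k l *
      (partial (\<lambda>z. a z j l) i x + partial (\<lambda>z. a z i l) j x - partial (\<lambda>z. a z i j) l x))"

text \<open>Covariant derivative b_{i|j} of a 1-form b = b_i y^i w.r.t. Levi-Civita connection of a.\<close>
definition cov_deriv :: "(real^'n \<Rightarrow> 'n \<Rightarrow> 'n \<Rightarrow> real) \<Rightarrow> (real^'n \<Rightarrow> 'n \<Rightarrow> real) \<Rightarrow> 'n \<Rightarrow> 'n \<Rightarrow> real^'n \<Rightarrow> real" where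
  "cov_deriv a b i j x = partial (\<lambda>z. b z i) j x - (\<Sum>k\<in>UNIV. b x k * christoffel a k i j x)"

definition closed_conformal :: "(real^'n) set \<Rightarrow> (real^'n \<Rightarrow> 'n \<Rightarrow> 'n \<Rightarrow> real) \<Rightarrow> (real^'n \<Rightarrow> 'n \<Rightarrow> real) \<Rightarrow> bool" where
  "closed_conformal U a b \<longleftrightarrow> (\<exists>c :: real^'n \<Rightarrow> real. \<forall>x\<in>U. \<forall>i j. cov_deriv a b i j x = c x * a x i j)"

definition riemannian_metric_on :: "(real^'n) set \<Rightarrow> (real^'n \<Rightarrow> 'n \<Rightarrow> 'n \<Rightarrow> real) \<Rightarrow> bool" where
  "riemannian_metric_on U a \<longleftrightarrow> (\<forall>x\<in>U. (\<forall>i j. a x i j = a x j i) \<and>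
      (\<forall>v::real^'n. v \<noteq> 0 \<longrightarrow> (\<Sum>i\<in>UNIV. \<Sum>j\<in>UNIV. a x i j * v$i * v$j) > 0))"

definition form_norm_sq :: "(real^'n \<Rightarrow> 'n \<Rightarrow> 'n \<Rightarrow> real) \<Rightarrow> (real^'n \<Rightarrow> 'n \<Rightarrow> real) \<Rightarrow> real^'n \<Rightarrow> real" where
  "form_norm_sq a b x = (\<Sum>i\<in>UNIV. \<Sum>j\<in>UNIV. inv_metric a x i j * b x i * b x j)"

end

theory Submission
  imports Defs
begin


lemma matrix_inv_eq:
  fixes A B :: "real^'n^'n"
  assumes "A ** B = mat 1"
  shows "matrix_inv A = B"
proof -
  have BA: "B ** A = mat 1" using assms matrix_left_right_inverse by blast
  have ex: "A ** B = mat 1 \<and> B ** A = mat 1" using assms BA by blast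
  have "A ** matrix_inv A = mat 1 \<and> matrix_inv A ** A = mat 1"
    unfolding matrix_inv_def by (rule someI, rule ex)
  then have "matrix_inv A = matrix_inv A ** (A ** B)" by (simp add: assms)
  also have "\<dots> = (matrix_inv A ** A) ** B" by (simp add: matrix_mul_assoc)
  also have "\<dots> = B" using \<open>A ** matrix_inv A = mat 1 \<and> matrix_inv A ** A = mat 1\<close> by simp
  finally show ?thesis .
qed

lemma dcong: "(f has_real_derivative D) F \<Longrightarrow> D = E \<Longrightarrow> (f has_real_derivative E) F" by simp

lemma comp_line:
  "(x + t *\<^sub>R axis i 1) $ m = x$m + t * (if m = i then 1 else 0)"
  by (simp add: axis_def)

lemma norm_line:
  fixes x :: "real^'n"
  shows "(norm (x + t *\<^sub>R axis i 1))^2 = (norm x)^2 + 2*t*x$i + t^2"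
  unfolding power2_norm_eq_inner by (simp add: inner_add_left inner_add_right inner_axis inner_axis' inner_commute power2_eq_square algebra_simps)

lemma deriv_g_line:
  fixes x :: "real^'n"
  assumes "(g has_real_derivative g') (at ((norm x)^2))"
  shows "((\<lambda>t. g ((norm (x + t *\<^sub>R axis i 1))^2)) has_real_derivative g' * (2 * x$i)) (at 0)"
proof -
  have e: "(\<lambda>t. g ((norm (x + t *\<^sub>R axis i 1))^2)) = (\<lambda>t. g ((norm x)^2 + 2*t*x$i + t^2))"
    by (simp add: norm_line)
  have d: "((\<lambda>t::real. (norm x)^2 + 2*t*x$i + t^2) has_real_derivative 2 * x$i) (at 0)"
    by (auto intro!: derivative_eq_intros)
  have g2: "(g has_real_derivative g') (at ((norm x)^2 + 2*0*x$i + 0^2))" using assms by simp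
  show ?thesis unfolding e using DERIV_chain2[OF g2 d] by simp
qed

lemma deriv_comp_line:
  fixes x :: "real^'n"
  shows "((\<lambda>t. (x + t *\<^sub>R axis i 1) $ m) has_real_derivative (if m = i then 1 else 0)) (at 0)"
  unfolding comp_line by (auto intro!: derivative_eq_intros)

lemma partial_b:
  fixes x :: "real^'n"
  assumes "(g has_real_derivative g') (at ((norm x)^2))"
  shows "partial (\<lambda>z. g ((norm z)^2) * z$m) i x = g' * (2 * x$i) * x$m + g ((norm x)^2) * (if m = i then 1 else 0)"
proof -
  have "((\<lambda>t. g ((norm (x + t *\<^sub>R axis i 1))^2) * (x + t *\<^sub>R axis i 1) $ m) has_real_derivative
     g' * (2 * x$i) * ((x + 0 *\<^sub>R axis i 1) $ m) + (if m = i then 1 else 0) * g ((norm (x + 0 *\<^sub>R axis i 1))^2)) (at 0)"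
    by (rule DERIV_mult[OF deriv_g_line[OF assms] deriv_comp_line])
  then show ?thesis unfolding partial_def by (simp add: DERIV_imp_deriv)
qed

lemma partial_a:
  fixes x :: "real^'n"
  assumes "(g1 has_real_derivative g1') (at ((norm x)^2))"
    and "(g2 has_real_derivative g2') (at ((norm x)^2))"
  shows "partial (\<lambda>z. g1 ((norm z)^2) * d - g2 ((norm z)^2) * z$j * z$l) i x =
     g1' * (2 * x$i) * d - (g2' * (2 * x$i) * x$j * x$l + g2 ((norm x)^2) * ((if j = i then 1 else 0) * x$l + x$j * (if l = i then 1 else 0)))"
proof -
  have "((\<lambda>t. g1 ((norm (x + t *\<^sub>R axis i 1))^2) * d - g2 ((norm (x + t *\<^sub>R axis i 1))^2) * (x + t *\<^sub>R axis i 1) $ j * (x + t *\<^sub>R axis i 1) $ l) has_real_derivative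
     g1' * (2 * x$i) * d - (g2' * (2 * x$i) * x$j * x$l + g2 ((norm x)^2) * ((if j = i then 1 else 0) * x$l + x$j * (if l = i then 1 else 0)))) (at 0)"
  proof -
    note D1 = DERIV_cmult_right[OF deriv_g_line[OF assms(1)], of i d]
    note D2 = DERIV_mult[OF DERIV_mult[OF deriv_g_line[OF assms(2)] deriv_comp_line[of x i j]] deriv_comp_line[of x i l]]
    show ?thesis
      apply (rule dcong[OF DERIV_diff[OF D1 D2]])
      by (simp add: algebra_simps)
  qed
  then show ?thesis unfolding partial_def by (simp add: DERIV_imp_deriv)
qed



definition kd :: "'n::finite \<Rightarrow> 'n \<Rightarrow> real" where "kd i j = (if i = j then 1 else 0)"

lemma kd_sym: "kd i j = kd j i" by (simp add: kd_def)

lemma sum_kd1[simp]: "(\<Sum>k\<in>UNIV. kd i k * f k) = f i"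
proof -
  have "(\<Sum>k\<in>UNIV. kd i k * f k) = (\<Sum>k\<in>UNIV. if i = k then f k else 0)"
    by (rule sum.cong) (auto simp: kd_def)
  then show ?thesis by simp
qed
lemma sum_kd2[simp]: "(\<Sum>k\<in>UNIV. kd k i * f k) = f i"
  using sum_kd1[of i f] by (simp add: kd_sym)

lemma sum_sq: "(\<Sum>k\<in>UNIV. (x::real^'n)$k * x$k) = (norm x)^2"
  by (simp add: power2_norm_eq_inner inner_vec_def)

lemma contract1:
  fixes x :: "real^'n"
  assumes s: "s = (norm x)^2" and u: "u \<noteq> 0" and q: "u - r * s \<noteq> 0"
  shows "(\<Sum>k\<in>UNIV. (f * x$k) * ((kd k l + r/(u - r * s)*x$k*x$l)/u)) = f/(u - r * s) * x$l"
proof -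
  have "(\<Sum>k\<in>UNIV. (f * x$k) * ((kd k l + r/(u - r * s)*x$k*x$l)/u))
      = (\<Sum>k\<in>UNIV. (f/u) * (kd k l * x$k) + (f*r/((u - r * s)*u)*x$l) * (x$k * x$k))"
    using u q by (intro sum.cong) (auto simp: field_simps)
  also have "\<dots> = (f/u) * (\<Sum>k\<in>UNIV. kd k l * x$k) + (f*r/((u - r * s)*u)*x$l) * (\<Sum>k\<in>UNIV. x$k * x$k)"
    by (simp only: sum.distrib sum_distrib_left)
  also have "\<dots> = (f/u) * x$l + (f*r/((u - r * s)*u)*x$l) * s"
    by (simp only: sum_kd2 sum_sq s)
  also have "\<dots> = f/(u - r * s) * x$l"
    using u q by (simp add: field_simps)
  finally show ?thesis .
qed

lemma swap_contr:
  fixes b :: "'n::finite \<Rightarrow> real"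
  shows "(\<Sum>k\<in>UNIV. b k * ((1/2) * (\<Sum>l\<in>UNIV. M k l * S l))) = (1/2) * (\<Sum>l\<in>UNIV. (\<Sum>k\<in>UNIV. b k * M k l) * S l)"
proof -
  have "(\<Sum>k\<in>UNIV. b k * ((1/2) * (\<Sum>l\<in>UNIV. M k l * S l))) = (1/2) * (\<Sum>k\<in>UNIV. \<Sum>l\<in>UNIV. b k * M k l * S l)"
    by (simp add: sum_distrib_left mult_ac)
  also have "\<dots> = (1/2) * (\<Sum>l\<in>UNIV. \<Sum>k\<in>UNIV. b k * M k l * S l)"
    by (subst sum.swap) simp
  also have "\<dots> = (1/2) * (\<Sum>l\<in>UNIV. (\<Sum>k\<in>UNIV. b k * M k l) * S l)"
    by (simp add: sum_distrib_right)
  finally show ?thesis .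
qed

lemma contract2:
  fixes x :: "real^'n"
  assumes s: "s = (norm x)^2"
    and A: "\<And>i j l. A i j l = u' * (2 * x$i) * kd j l - (r' * (2 * x$i) * x$j * x$l + r * (kd j i * x$l + x$j * kd l i))"
  shows "(\<Sum>l\<in>UNIV. (h * x$l) * (A i j l + A j i l - A l i j)) =
     h * (4 * u' - 2 * r' * s) * x$i * x$j - h * (2 * u' + 2 * r) * s * kd i j"
proof -
  have "(\<Sum>l\<in>UNIV. (h * x$l) * (A i j l + A j i l - A l i j)) =
     (\<Sum>l\<in>UNIV. (2*h*u'*x$i) * (kd j l * x$l) + (2*h*u'*x$j) * (kd i l * x$l)
        + (- 2*h*u'*kd i j - 2*h*r'*x$i*x$j - 2*h*r*kd i j) * (x$l * x$l))"
    by (rule sum.cong) (auto simp: A kd_def algebra_simps)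
  also have "\<dots> = (2*h*u'*x$i) * (\<Sum>l\<in>UNIV. kd j l * x$l) + (2*h*u'*x$j) * (\<Sum>l\<in>UNIV. kd i l * x$l)
        + (- 2*h*u'*kd i j - 2*h*r'*x$i*x$j - 2*h*r*kd i j) * (\<Sum>l\<in>UNIV. x$l * x$l)"
    by (simp only: sum.distrib sum_distrib_left)
  also have "\<dots> = (2*h*u'*x$i) * x$j + (2*h*u'*x$j) * x$i
        + (- 2*h*u'*kd i j - 2*h*r'*x$i*x$j - 2*h*r*kd i j) * s"
    by (simp only: sum_kd1 sum_sq s)
  finally show ?thesis by (simp add: algebra_simps)
qed

lemma minv:
  fixes x :: "real^'n"
  assumes s: "s = (norm x)^2" and u: "u \<noteq> 0" and q: "u - r * s \<noteq> 0"
  shows "matrix_inv (\<chi> i j. u * kd i j - r * x$i * x$j) = (\<chi> i j. (kd i j + r/(u - r * s) * x$i * x$j)/u)"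
proof (rule matrix_inv_eq)
  define p where "p = r/(u - r * s)"
  have e: "(\<Sum>k\<in>UNIV. (u * kd i k - r * x$i * x$k) * ((kd k j + p * x$k * x$j)/u)) = kd i j" for i j
  proof -
    have "(\<Sum>k\<in>UNIV. (u * kd i k - r * x$i * x$k) * ((kd k j + p * x$k * x$j)/u))
      = (\<Sum>k\<in>UNIV. kd i k * kd k j + (p * x$j) * (kd i k * x$k) + (- r/u * x$i) * (kd k j * x$k)
          + (- r * p / u * x$i * x$j) * (x$k * x$k))"
      using u by (intro sum.cong) (auto simp: field_simps)
    also have "\<dots> = (\<Sum>k\<in>UNIV. kd i k * kd k j) + (p * x$j) * (\<Sum>k\<in>UNIV. kd i k * x$k) + (- r/u * x$i) * (\<Sum>k\<in>UNIV. kd k j * x$k)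
          + (- r * p / u * x$i * x$j) * (\<Sum>k\<in>UNIV. x$k * x$k)"
      by (simp only: sum.distrib sum_distrib_left)
    also have "\<dots> = kd i j + (p * x$j) * x$i + (- r/u * x$i) * x$j + (- r * p / u * x$i * x$j) * s"
      by (simp only: sum_kd1 sum_kd2 sum_sq s)
    also have "\<dots> = kd i j + x$i * x$j * (p * (u - r * s) - r) / u"
      using u by (simp add: field_simps)
    also have "\<dots> = kd i j"
      using q by (simp add: p_def)
    finally show ?thesis .
  qed
  show "(\<chi> i j. u * kd i j - r * x$i * x$j) ** (\<chi> i j. (kd i j + r/(u - r * s) * x$i * x$j)/u) = mat 1"
    using e by (simp add: vec_eq_iff matrix_matrix_mult_def mat_def kd_def p_def)
qed



lemma form_contr:
  fixes x :: "real^'n"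
  assumes s: "s = (norm x)^2" and u: "u \<noteq> 0" and q: "u - r * s \<noteq> 0"
  shows "(\<Sum>i\<in>UNIV. \<Sum>j\<in>UNIV. ((kd i j + r/(u - r * s)*x$i*x$j)/u) * (f * x$i) * (f * x$j)) = f/(u - r * s) * f * s"
proof -
  have "(\<Sum>i\<in>UNIV. \<Sum>j\<in>UNIV. ((kd i j + r/(u - r * s)*x$i*x$j)/u) * (f * x$i) * (f * x$j))
     = (\<Sum>j\<in>UNIV. \<Sum>i\<in>UNIV. (f * x$i) * ((kd i j + r/(u - r * s)*x$i*x$j)/u) * (f * x$j))"
    by (subst sum.swap) (simp add: mult_ac)
  also have "\<dots> = (\<Sum>j\<in>UNIV. (\<Sum>i\<in>UNIV. (f * x$i) * ((kd i j + r/(u - r * s)*x$i*x$j)/u)) * (f * x$j))"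
    by (simp add: sum_distrib_right)
  also have "\<dots> = (\<Sum>j\<in>UNIV. (f/(u - r * s) * x$j) * (f * x$j))"
    by (simp only: contract1[OF s u q])
  also have "\<dots> = (\<Sum>j\<in>UNIV. (f/(u - r * s) * f) * (x$j * x$j))"
    by (simp add: mult_ac)
  also have "\<dots> = f/(u - r * s) * f * s"
    by (simp only: sum_distrib_left[symmetric] sum_sq s)
  finally show ?thesis .
qed

lemma key_identity:
  fixes C e k k' p' s sq :: real
  assumes e: "e > 0" and sq: "sq > 0" and sq2: "sq^2 = 1 - k * s"
  defines "g1 \<equiv> e" and "g1' \<equiv> e * (2 * p')" and "g2 \<equiv> e * k" and "g2' \<equiv> e * (2 * p') * k + e * k'"
    and "F \<equiv> C * sq * e" and "F' \<equiv> C * (inverse sq / 2 * (- (k' * s + k))) * e + C * sq * (e * (2 * p'))"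
  shows "F / (g1 - g2 * s) = C / sq"
    and "2 * F' - F / (g1 - g2 * s) * (2 * g1' - g2' * s) = - g2 * (C * (1 + 2 * p' * s) / sq)"
    and "F + F / (g1 - g2 * s) * (g1' + g2) * s = C * (1 + 2 * p' * s) / sq * g1"
proof -
  have q: "1 - k * s = sq * sq" using sq2 by (simp add: power2_eq_square)
  have d: "g1 - g2 * s = e * (sq * sq)" unfolding g1_def g2_def q[symmetric] by (simp add: algebra_simps)
  show 1: "F / (g1 - g2 * s) = C / sq" unfolding d F_def using e sq by (simp add: field_simps)
  have "2 * F' - C / sq * (2 * g1' - g2' * s) = - g2 * (C * (1 + 2 * p' * s) / sq)"
    unfolding F'_def g1'_def g2'_def g2_def using e sq
    apply (simp add: field_simps) using q by algebra
  then show "2 * F' - F / (g1 - g2 * s) * (2 * g1' - g2' * s) = - g2 * (C * (1 + 2 * p' * s) / sq)"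
    using 1 by simp
  have "F + C / sq * (g1' + g2) * s = C * (1 + 2 * p' * s) / sq * g1"
    unfolding F_def g1'_def g2_def g1_def using e sq
    apply (simp add: field_simps) using q by algebra
  then show "F + F / (g1 - g2 * s) * (g1' + g2) * s = C * (1 + 2 * p' * s) / sq * g1"
    using 1 by simp
qed



lemma smooth_deriv:
  assumes "smooth_on T f" "t \<in> T"
  shows "(f has_real_derivative deriv f t) (at t)"
proof -
  have "((deriv ^^ 0) f) field_differentiable (at t)" using assms unfolding smooth_on_def by blast
  then show ?thesis by (simp add: DERIV_deriv_iff_field_differentiable)
qed

lemma fin_alg:
  fixes Fp h G1' G2' s g2 c F g1 xi xj d :: real
  assumes "2*Fp - h*(2*G1' - G2'* s) = -g2*c" "F + h*(G1'+g2)* s = c*g1"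
  shows "Fp*(2*xj)*xi + F*d - (1/2)*(h*(4*G1' - 2*G2'* s)*xi*xj - h*(2*G1' + 2*g2)* s*d) = c*(g1*d - g2*xi*xj)"
proof -
  have "Fp*(2*xj)*xi + F*d - (1/2)*(h*(4*G1' - 2*G2'* s)*xi*xj - h*(2*G1' + 2*g2)* s*d)
     = xi*xj*(2*Fp - h*(2*G1' - G2'* s)) + d*(F + h*(G1'+g2)* s)"
    by (simp add: algebra_simps)
  also have "\<dots> = c*(g1*d - g2*xi*xj)" unfolding assms by (simp add: algebra_simps)
  finally show ?thesis .
qed

theorem corollary5p3:
  fixes U :: "(real^'n) set" and T :: "real set"
    and \<kappa> \<rho> :: "real \<Rightarrow> real" and C :: real
    and a :: "real^'n \<Rightarrow> 'n \<Rightarrow> 'n \<Rightarrow> real" and b :: "real^'n \<Rightarrow> 'n \<Rightarrow> real"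
  assumes "open U" and "connected U"
    and "open T" and "\<forall>x\<in>U. (norm x)^2 \<in> T"
    and "smooth_on T \<kappa>" and "smooth_on T \<rho>"
    and "\<forall>x\<in>U. 1 - \<kappa> ((norm x)^2) * (norm x)^2 > 0"
    and "C \<noteq> 0"
    and "a = (\<lambda>x i j. exp (2 * \<rho> ((norm x)^2)) *
              ((if i = j then 1 else 0) - \<kappa> ((norm x)^2) * x$i * x$j))"
    and "b = (\<lambda>x i. C * sqrt (1 - \<kappa> ((norm x)^2) * (norm x)^2) * exp (2 * \<rho> ((norm x)^2)) * x$i)"
  shows "riemannian_metric_on U a \<and> closed_conformal U a b \<and>
         (\<forall>x\<in>U. form_norm_sq a b x = C^2 * exp (2 * \<rho> ((norm x)^2)) * (norm x)^2)"
proof -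
  note aD = assms(9) and bD = assms(10)
  define g1 where "g1 = (\<lambda>r. exp (2 * \<rho> r))"
  define g2 where "g2 = (\<lambda>r. exp (2 * \<rho> r) * \<kappa> r)"
  define F where "F = (\<lambda>r. C * sqrt (1 - \<kappa> r * r) * exp (2 * \<rho> r))"
  have aE: "(\<lambda>z. a z j l) = (\<lambda>z. g1 ((norm z)^2) * kd j l - g2 ((norm z)^2) * z$j * z$l)" for j l
    by (rule ext) (simp add: aD g1_def g2_def kd_def algebra_simps)
  have aE2: "a z i j = g1 ((norm z)^2) * kd i j - g2 ((norm z)^2) * z$i * z$j" for z i j
    using aE[of i j] by (metis (no_types, lifting))
  have bE: "(\<lambda>z. b z m) = (\<lambda>z. F ((norm z)^2) * z$m)" for m
    by (rule ext) (simp add: bD F_def)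
  have bE2: "b z m = F ((norm z)^2) * z$m" for z m
    using bE[of m] by metis
  have pointwise: "riemannian_metric_on {x} a \<and>
     (\<forall>i j. cov_deriv a b i j x = C * (1 + 2 * deriv \<rho> ((norm x)^2) * (norm x)^2) / sqrt (1 - \<kappa> ((norm x)^2) * (norm x)^2) * a x i j) \<and>
     form_norm_sq a b x = C^2 * exp (2 * \<rho> ((norm x)^2)) * (norm x)^2" if xU: "x \<in> U" for x
  proof -
    define s where "s = (norm x)^2"
    have sT: "s \<in> T" using assms(4) xU s_def by blast
    have qpos: "1 - \<kappa> s * s > 0" using assms(7) xU s_def by blast
    define e where "e = exp (2 * \<rho> s)"
    define p' where "p' = deriv \<rho> s"
    define k' where "k' = deriv \<kappa> s"
    define sq where "sq = sqrt (1 - \<kappa> s * s)"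
    have dr: "(\<rho> has_real_derivative p') (at s)" unfolding p'_def by (rule smooth_deriv[OF assms(6) sT])
    have dk: "(\<kappa> has_real_derivative k') (at s)" unfolding k'_def by (rule smooth_deriv[OF assms(5) sT])
    have e0: "e > 0" unfolding e_def by simp
    have sq0: "sq > 0" unfolding sq_def using qpos by simp
    have sq2: "sq^2 = 1 - \<kappa> s * s" unfolding sq_def using qpos by simp
    have dg1: "(g1 has_real_derivative e * (2 * p')) (at s)"
      unfolding g1_def e_def by (auto intro!: derivative_eq_intros dr)
    have dg2: "(g2 has_real_derivative e * (2 * p') * \<kappa> s + e * k') (at s)"
      unfolding g2_def e_def by (auto intro!: derivative_eq_intros dr dk)
    have dq: "((\<lambda>r. 1 - \<kappa> r * r) has_real_derivative - (k' * s + \<kappa> s)) (at s)"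
      by (auto intro!: derivative_eq_intros dk)
    have dsq: "((\<lambda>r. sqrt (1 - \<kappa> r * r)) has_real_derivative inverse sq / 2 * - (k' * s + \<kappa> s)) (at s)"
      unfolding sq_def using DERIV_chain2[OF DERIV_real_sqrt[OF qpos] dq] by simp
    have dF: "(F has_real_derivative C * (inverse sq / 2 * (- (k' * s + \<kappa> s))) * e + C * sq * (e * (2 * p'))) (at s)"
      using DERIV_mult[OF DERIV_cmult[OF dsq, of C] dg1]
      unfolding F_def g1_def apply (rule dcong) by (simp add: e_def sq_def algebra_simps)
    have g1s: "g1 s = e" unfolding g1_def e_def by simp
    have g2s: "g2 s = e * \<kappa> s" unfolding g2_def e_def by simp
    have Fs: "F s = C * sq * e" unfolding F_def sq_def e_def by simp
    have den: "g1 s - g2 s * s = e * (1 - \<kappa> s * s)" unfolding g1s g2s by (simp add: algebra_simps)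
    have den0: "g1 s - g2 s * s \<noteq> 0" unfolding den using e0 qpos by simp
    have g10: "g1 s \<noteq> 0" using e0 g1s by simp
    have mm: "metric_matrix a x = (\<chi> i j. g1 s * kd i j - g2 s * x$i * x$j)"
      unfolding metric_matrix_def by (simp add: vec_eq_iff aE2 s_def)
    have inv: "inv_metric a x k l = (kd k l + g2 s/(g1 s - g2 s * s) * x$k * x$l)/g1 s" for k l
      unfolding inv_metric_def mm minv[OF s_def g10 den0] by simp
    define A where "A i j l = e * (2 * p') * (2 * x$i) * kd j l - ((e * (2 * p') * \<kappa> s + e * k') * (2 * x$i) * x$j * x$l + g2 s * (kd j i * x$l + x$j * kd l i))" for i j l
    have pa: "partial (\<lambda>z. a z j l) i x = A i j l" for i j l
      unfolding aE A_def using partial_a[OF dg1[unfolded s_def] dg2[unfolded s_def], of "kd j l" j l i]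
      by (simp add: s_def kd_def)
    have chr: "christoffel a k i j x = (1/2) * (\<Sum>l\<in>UNIV. ((kd k l + g2 s/(g1 s - g2 s * s) * x$k * x$l)/g1 s) * (A i j l + A j i l - A l i j))" for k i j
      unfolding christoffel_def inv pa ..
    have riem: "riemannian_metric_on {x} a"
      unfolding riemannian_metric_on_def
    proof (intro ballI conjI allI impI)
      fix y i j assume "y \<in> {x}"
      show "a y i j = a y j i" by (simp add: aD mult_ac)
    next
      fix y and v :: "real^'n" assume y: "y \<in> {x}" and v: "v \<noteq> 0"
      have "(\<Sum>i\<in>UNIV. \<Sum>j\<in>UNIV. a y i j * v$i * v$j) = (\<Sum>i\<in>UNIV. \<Sum>j\<in>UNIV. (e * v$i) * (kd i j * v$j) + (- e * \<kappa> s * x$i * v$i) * (x$j * v$j))"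
        using y by (intro sum.cong refl) (auto simp: aE2 g1s g2s s_def[symmetric] algebra_simps)
      also have "\<dots> = (\<Sum>i\<in>UNIV. (e * v$i) * v$i + (- e * \<kappa> s * x$i * v$i) * (\<Sum>j\<in>UNIV. x$j * v$j))"
        by (simp only: sum.distrib sum_distrib_left[symmetric] sum_kd1)
      also have "\<dots> = (\<Sum>i\<in>UNIV. e * (v$i * v$i) + (- e * \<kappa> s * (\<Sum>j\<in>UNIV. x$j * v$j)) * (x$i * v$i))"
        by (intro sum.cong refl) (simp add: algebra_simps)
      also have "\<dots> = e * (\<Sum>i\<in>UNIV. v$i * v$i) + (- e * \<kappa> s * (\<Sum>j\<in>UNIV. x$j * v$j)) * (\<Sum>i\<in>UNIV. x$i * v$i)"
        by (simp only: sum.distrib sum_distrib_left)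
      also have "\<dots> = e * ((norm v)^2 - \<kappa> s * (inner x v)^2)"
        by (simp add: sum_sq inner_vec_def power2_eq_square algebra_simps)
      finally have eq: "(\<Sum>i\<in>UNIV. \<Sum>j\<in>UNIV. a y i j * v$i * v$j) = e * ((norm v)^2 - \<kappa> s * (inner x v)^2)" .
      have nv: "(norm v)^2 > 0" using v by simp
      have cs: "(inner x v)^2 \<le> s * (norm v)^2"
      proof -
        have "\<bar>inner x v\<bar> \<le> norm x * norm v" by (rule Cauchy_Schwarz_ineq2)
        then have "\<bar>inner x v\<bar>^2 \<le> (norm x * norm v)^2" by (rule power_mono) simp
        then show ?thesis by (simp add: s_def power_mult_distrib)
      qed
      have "\<kappa> s * (inner x v)^2 < (norm v)^2"
      proof (cases "\<kappa> s \<le> 0")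
        case True
        then have "\<kappa> s * (inner x v)^2 \<le> 0" by (simp add: mult_nonpos_nonneg)
        then show ?thesis using nv by linarith
      next
        case False
        then have "\<kappa> s * (inner x v)^2 \<le> \<kappa> s * (s * (norm v)^2)" using cs by simp
        also have "\<dots> = (\<kappa> s * s) * (norm v)^2" by simp
        also have "\<dots> < 1 * (norm v)^2" using qpos nv by (intro mult_strict_right_mono) auto
        finally show ?thesis by simp
      qed
      then show "(\<Sum>i\<in>UNIV. \<Sum>j\<in>UNIV. a y i j * v$i * v$j) > 0" unfolding eq using e0 by simp
    qed
    have cov: "cov_deriv a b i j x = C * (1 + 2 * p' * s) / sq * a x i j" for i j
    proof -
      have pb: "partial (\<lambda>z. b z i) j x = (C * (inverse sq / 2 * (- (k' * s + \<kappa> s))) * e + C * sq * (e * (2 * p'))) * (2 * x$j) * x$i + F s * kd i j"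
        unfolding bE using partial_b[OF dF[unfolded s_def], of i j] by (simp add: s_def kd_def)
      have "(\<Sum>k\<in>UNIV. b x k * christoffel a k i j x)
          = (\<Sum>k\<in>UNIV. (F s * x$k) * ((1/2) * (\<Sum>l\<in>UNIV. ((kd k l + g2 s/(g1 s - g2 s * s) * x$k * x$l)/g1 s) * (A i j l + A j i l - A l i j))))"
        by (simp only: chr bE2 s_def)
      also have "\<dots> = (1/2) * (\<Sum>l\<in>UNIV. (\<Sum>k\<in>UNIV. (F s * x$k) * ((kd k l + g2 s/(g1 s - g2 s * s) * x$k * x$l)/g1 s)) * (A i j l + A j i l - A l i j))"
        by (rule swap_contr)
      also have "\<dots> = (1/2) * (\<Sum>l\<in>UNIV. (F s/(g1 s - g2 s * s) * x$l) * (A i j l + A j i l - A l i j))"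
        by (simp only: contract1[OF s_def g10 den0])
      also have "\<dots> = (1/2) * (F s/(g1 s - g2 s * s) * (4 * (e * (2 * p')) - 2 * (e * (2 * p') * \<kappa> s + e * k') * s) * x$i * x$j
              - F s/(g1 s - g2 s * s) * (2 * (e * (2 * p')) + 2 * g2 s) * s * kd i j)"
        by (simp only: contract2[OF s_def A_def])
      finally have ch: "(\<Sum>k\<in>UNIV. b x k * christoffel a k i j x) = \<dots>" .
      note K = key_identity[OF e0 sq0 sq2]
      have K1: "F s / (g1 s - g2 s * s) = C / sq" using K(1) g1s g2s Fs by simp
      have K2: "2 * (C * (inverse sq / 2 * (- (k' * s + \<kappa> s))) * e + C * sq * (e * (2 * p'))) - F s / (g1 s - g2 s * s) * (2 * (e * (2 * p')) - (e * (2 * p') * \<kappa> s + e * k') * s) = - g2 s * (C * (1 + 2 * p' * s) / sq)"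
        using K(2) g1s g2s Fs by simp
      have K3: "F s + F s / (g1 s - g2 s * s) * ((e * (2 * p')) + g2 s) * s = C * (1 + 2 * p' * s) / sq * g1 s"
        using K(3) g1s g2s Fs by simp
      show ?thesis
        unfolding cov_deriv_def pb ch aE2 s_def[symmetric]
        by (rule fin_alg[OF K2 K3])

    qed
    have fn: "form_norm_sq a b x = C^2 * exp (2 * \<rho> ((norm x)^2)) * (norm x)^2"
    proof -
      have K1: "F s / (g1 s - g2 s * s) = C / sq" using key_identity(1)[OF e0 sq0 sq2] g1s g2s Fs by simp
      have "form_norm_sq a b x = (\<Sum>i\<in>UNIV. \<Sum>j\<in>UNIV. ((kd i j + g2 s/(g1 s - g2 s * s)*x$i*x$j)/g1 s) * (F s * x$i) * (F s * x$j))"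
        unfolding form_norm_sq_def inv bE2 s_def ..
      also have "\<dots> = F s/(g1 s - g2 s * s) * F s * s"
        by (rule form_contr[OF s_def g10 den0])
      also have "\<dots> = (C / sq) * (C * sq * e) * s"
        by (simp only: K1) (simp only: Fs)
      also have "\<dots> = C^2 * e * s"
        using sq0 by (simp add: power2_eq_square)
      finally show ?thesis unfolding e_def s_def .
    qed
    show ?thesis using riem cov fn s_def p'_def sq_def by simp
  qed
  show ?thesis
  proof (intro conjI)
    show "riemannian_metric_on U a"
      using pointwise unfolding riemannian_metric_on_def by blast
    show "closed_conformal U a b"
      unfolding closed_conformal_def
      by (rule exI[of _ "\<lambda>x. C * (1 + 2 * deriv \<rho> ((norm x)^2) * (norm x)^2) / sqrt (1 - \<kappa> ((norm x)^2) * (norm x)^2)"])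
        (use pointwise in blast)
    show "\<forall>x\<in>U. form_norm_sq a b x = C^2 * exp (2 * \<rho> ((norm x)^2)) * (norm x)^2"
      using pointwise by blast
  qed
qed

end
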